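(* For every formula $\varphi$, if $\vdash_{\mathbf{PTKv}^{+}}\varphi$ then $\varphi$ is valid (true at every world of every model).
   Context: Fix a countable set $\mathsf{Prop}$ of propositional variables, a countable set $\mathsf{Term}$ of atomic terms, and a finite set of agents $\mathcal{A}=\{1,\dots,n\}$. Let $\Theta_K=[0,1]\cap\mathbb{Q}$ and $\Theta_V^+=(\frac12,1]\cap\mathbb{Q}$. Formulas are generated by $\varphi::= p\mid t=s\mid\neg\varphi\mid(\varphi\to\psi)\mid K_i^\theta\varphi\mid Kv_i^\eta(t)$ with $p\in\mathsf{Prop}$, $t,s\in\mathsf{Term}$, $i\in\mathcal{A}$, $\theta\in\Theta_K$, $\eta\in\Theta_V^+$; other connectives are standard abbreviations. A model is $M=(W,D,\{P_i\}_{i\in\mathcal{A}},V,\mathsf{val})$ with $W\neq\emptyset$, $D\neq\emptyset$, $P_i(w)$ a countably additive probability measure on the powerset of $W$ for each $i,w$, $V:W\times\mathsf{Prop}\to\{0,1\}$, $\mathsf{val}:W\times\mathsf{Term}\to D$. Write $\llbracket\varphi\rrbracket^M=\{u\mid M,u\models\varphi\}$ and $\llbracket t=d\rrbracket^M=\{u\mid \mathsf{val}(u,t)=d\}$. Satisfaction: $M,w\models p$ iff $V(w,p)=1$; $M,w\models t=s$ iff $\mathsf{val}(w,t)=\mathsf{val}(w,s)$; Boolean clauses as usual; $M,w\models K_i^\theta\varphi$ iff $P_i(w)(\llbracket\varphi\rrbracket^M)\ge\theta$; $M,w\models Kv_i^\eta(t)$ iff there exists a unique $d\in D$ with $P_i(w)(\llbracket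 t=d\rrbracket^M)\ge\eta$. The system $\mathbf{PTKv}^{-}$ has rules Modus Ponens and $\mathrm{Nec}_K$ (from $\varphi$ infer $K_i^\theta\varphi$, for all $i\in\mathcal{A}$, $\theta\in\Theta_K$), and axiom schemata (for all agents $i$, terms $t,s,u$, formulas $\varphi,\psi$): all propositional tautologies; $t=t$; $t=s\to s=t$; $(t=s\wedge s=u)\to t=u$; $t=s\to((t=u)\leftrightarrow(s=u))$; $K_i^{\theta'}\varphi\to K_i^\theta\varphi$ for $\theta\le\theta'$ in $\Theta_K$; $K_i^\alpha(\varphi\to\psi)\to(K_i^\beta\varphi\to K_i^{\max\{0,\alpha+\beta-1\}}\psi)$ for $\alpha,\beta\in\Theta_K$; $K_i^\alpha\varphi\to\neg K_i^\beta\neg\varphi$ for $\alpha+\beta>1$; $K_i^0\varphi$; $K_i^1(t=s)\to(K_i^\theta(t=u)\leftrightarrow K_i^\theta(s=u))$ for $\theta\in\Theta_K$; $K_i^1(t=s)\to(Kv_i^\eta(t)\leftrightarrow Kv_i^\eta(s))$ for $\eta\in\Theta_V^+$. The system $\mathbf{PTKv}^{+}$ is $\mathbf{PTKv}^{-}$ plus the schemata: $K_i^1(\varphi\leftrightarrow\psi)\to(K_i^\theta\varphi\leftrightarrow K_i^\theta\psi)$ for $\theta\in\Theta_K$; $K_i^\alpha\varphi\wedge K_i^\beta\psi\wedge K_i^1\neg(\varphi\wedge\psi)\to K_i^{\alpha+\beta}(\varphi\vee\psi)$ for $\alpha,\beta\in\Theta_K$ with $\alpha+\beta\le1$; $Kv_i^\eta(t)\to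 Kv_i^\zeta(t)$ for $\eta,\zeta\in\Theta_V^+$ with $\zeta\le\eta$. *)

theory Defs
  imports "HOL-Probability.Probability"
begin

text \<open>Propositional variables 'p, atomic terms 't (both countable), agents 'i (finite).
  Thresholds are rationals; their admissible ranges are enforced by wf.\<close>

datatype ('p, 't, 'i) fm =
    Atom 'p
  | Eq 't 't
  | Neg "('p, 't, 'i) fm"
  | Imp "('p, 't, 'i) fm" "('p, 't, 'i) fm"
  | K 'i rat "('p, 't, 'i) fm"
  | Kv 'i rat 't

definition ThetaK :: "rat set" where "ThetaK = {q. 0 \<le> q \<and> q \<le> 1}"
definition ThetaV :: "rat set" where "ThetaV = {q. 1/2 < q \<and> q \<le> 1}"

primrec wf :: "('p, 't, 'i) fm \<Rightarrow> bool" where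
  "wf (Atom p) = True"
| "wf (Eq t s) = True"
| "wf (Neg a) = wf a"
| "wf (Imp a b) = (wf a \<and> wf b)"
| "wf (K i \<theta> a) = (\<theta> \<in> ThetaK \<and> wf a)"
| "wf (Kv i \<eta> t) = (\<eta> \<in> ThetaV)"

definition And :: "('p, 't, 'i) fm \<Rightarrow> ('p, 't, 'i) fm \<Rightarrow> ('p, 't, 'i) fm" where
  "And a b = Neg (Imp a (Neg b))"
definition Or :: "('p, 't, 'i) fm \<Rightarrow> ('p, 't, 'i) fm \<Rightarrow> ('p, 't, 'i) fm" where
  "Or a b = Imp (Neg a) b"
definition Iff :: "('p, 't, 'i) fm \<Rightarrow> ('p, 't, 'i) fm \<Rightarrow> ('p, 't, 'i) fm" where
  "Iff a b = And (Imp a b) (Imp b a)"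

datatype pf = PVar nat | PNeg pf | PImp pf pf

primrec peval :: "(nat \<Rightarrow> bool) \<Rightarrow> pf \<Rightarrow> bool" where
  "peval v (PVar n) = v n"
| "peval v (PNeg a) = (\<not> peval v a)"
| "peval v (PImp a b) = (peval v a \<longrightarrow> peval v b)"

definition taut :: "pf \<Rightarrow> bool" where "taut a = (\<forall>v. peval v a)"

primrec psubst :: "(nat \<Rightarrow> ('p, 't, 'i) fm) \<Rightarrow> pf \<Rightarrow> ('p, 't, 'i) fm" where
  "psubst \<sigma> (PVar n) = \<sigma> n"
| "psubst \<sigma> (PNeg a) = Neg (psubst \<sigma> a)"
| "psubst \<sigma> (PImp a b) = Imp (psubst \<sigma> a) (psubst \<sigma> b)"

text \<open>A model: worlds = the type 'w, domain = the type 'd (both nonempty),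
  P i w a countably additive probability measure on the powerset of the worlds.\<close>

definition is_model :: "('i \<Rightarrow> 'w \<Rightarrow> 'w measure) \<Rightarrow> bool" where
  "is_model P = (\<forall>i w. prob_space (P i w) \<and> space (P i w) = UNIV \<and> sets (P i w) = UNIV)"

primrec sat :: "('i \<Rightarrow> 'w \<Rightarrow> 'w measure) \<Rightarrow> ('w \<Rightarrow> 'p \<Rightarrow> bool) \<Rightarrow> ('w \<Rightarrow> 't \<Rightarrow> 'd)
    \<Rightarrow> 'w \<Rightarrow> ('p, 't, 'i) fm \<Rightarrow> bool" where
  "sat P V val w (Atom p) = V w p"
| "sat P V val w (Eq t s) = (val w t = val w s)"
| "sat P V val w (Neg a) = (\<not> sat P V val w a)"
| "sat P V val w (Imp a b) = (sat P V val w a \<longrightarrow> sat P V val w b)"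
| "sat P V val w (K i \<theta> a) = (measure (P i w) {u. sat P V val u a} \<ge> real_of_rat \<theta>)"
| "sat P V val w (Kv i \<eta> t) =
     (\<exists>!d. measure (P i w) {u. val u t = d} \<ge> real_of_rat \<eta>)"

definition valid_in :: "'w itself \<Rightarrow> 'd itself \<Rightarrow> ('p, 't, 'i) fm \<Rightarrow> bool" where
  "valid_in _ _ \<phi> = (\<forall>(P :: 'i \<Rightarrow> 'w \<Rightarrow> 'w measure) (V :: 'w \<Rightarrow> 'p \<Rightarrow> bool) (val :: 'w \<Rightarrow> 't \<Rightarrow> 'd) w.
       is_model P \<longrightarrow> sat P V val w \<phi>)"

inductive PTKv_plus :: "('p, 't, 'i) fm \<Rightarrow> bool" where
  taut: "taut A \<Longrightarrow> (\<forall>n. wf (\<sigma> n)) \<Longrightarrow> PTKv_plus (psubst \<sigma> A)"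
| eq_refl: "PTKv_plus (Eq t t)"
| eq_sym: "PTKv_plus (Imp (Eq t s) (Eq s t))"
| eq_trans: "PTKv_plus (Imp (And (Eq t s) (Eq s u)) (Eq t u))"
| eq_subst: "PTKv_plus (Imp (Eq t s) (Iff (Eq t u) (Eq s u)))"
| K_mono: "\<theta> \<in> ThetaK \<Longrightarrow> \<theta>' \<in> ThetaK \<Longrightarrow> \<theta> \<le> \<theta>' \<Longrightarrow> wf \<phi> \<Longrightarrow>
     PTKv_plus (Imp (K i \<theta>' \<phi>) (K i \<theta> \<phi>))"
| K_dist: "\<alpha> \<in> ThetaK \<Longrightarrow> \<beta> \<in> ThetaK \<Longrightarrow> wf \<phi> \<Longrightarrow> wf \<psi> \<Longrightarrow>
     PTKv_plus (Imp (K i \<alpha> (Imp \<phi> \<psi>)) (Imp (K i \<beta> \<phi>) (K i (max 0 (\<alpha> + \<beta> - 1)) \<psi>)))"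
| K_cons: "\<alpha> \<in> ThetaK \<Longrightarrow> \<beta> \<in> ThetaK \<Longrightarrow> \<alpha> + \<beta> > 1 \<Longrightarrow> wf \<phi> \<Longrightarrow>
     PTKv_plus (Imp (K i \<alpha> \<phi>) (Neg (K i \<beta> (Neg \<phi>))))"
| K_zero: "wf \<phi> \<Longrightarrow> PTKv_plus (K i 0 \<phi>)"
| K_eq: "\<theta> \<in> ThetaK \<Longrightarrow>
     PTKv_plus (Imp (K i 1 (Eq t s)) (Iff (K i \<theta> (Eq t u)) (K i \<theta> (Eq s u))))"
| Kv_eq: "\<eta> \<in> ThetaV \<Longrightarrow>
     PTKv_plus (Imp (K i 1 (Eq t s)) (Iff (Kv i \<eta> t) (Kv i \<eta> s)))"
| K_equiv: "\<theta> \<in> ThetaK \<Longrightarrow> wf \<phi> \<Longrightarrow> wf \<psi> \<Longrightarrow>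
     PTKv_plus (Imp (K i 1 (Iff \<phi> \<psi>)) (Iff (K i \<theta> \<phi>) (K i \<theta> \<psi>)))"
| K_add: "\<alpha> \<in> ThetaK \<Longrightarrow> \<beta> \<in> ThetaK \<Longrightarrow> \<alpha> + \<beta> \<le> 1 \<Longrightarrow> wf \<phi> \<Longrightarrow> wf \<psi> \<Longrightarrow>
     PTKv_plus (Imp (And (And (K i \<alpha> \<phi>) (K i \<beta> \<psi>)) (K i 1 (Neg (And \<phi> \<psi>))))
                    (K i (\<alpha> + \<beta>) (Or \<phi> \<psi>)))"
| Kv_mono: "\<eta> \<in> ThetaV \<Longrightarrow> \<zeta> \<in> ThetaV \<Longrightarrow> \<zeta> \<le> \<eta> \<Longrightarrow>
     PTKv_plus (Imp (Kv i \<eta> t) (Kv i \<zeta> t))"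
| MP: "PTKv_plus (Imp \<phi> \<psi>) \<Longrightarrow> PTKv_plus \<phi> \<Longrightarrow> PTKv_plus \<psi>"
| Nec: "PTKv_plus \<phi> \<Longrightarrow> \<theta> \<in> ThetaK \<Longrightarrow> PTKv_plus (K i \<theta> \<phi>)"

end

theory Submission
  imports Defs
begin

lemma psubst_sat: "sat P V val w (psubst \<sigma> A) = peval (\<lambda>n. sat P V val w (\<sigma> n)) A"
  by (induction A) auto

locale pm = prob_space M for M :: "'w measure" +
  assumes sp: "space M = UNIV" and st: "sets M = UNIV"
begin

lemma ev[simp]: "A \<in> sets M" by (simp add: st)

lemma le1: "measure M A \<le> 1" by simp

lemma compl: "measure M (- A) = 1 - measure M A"
  using prob_compl[of A] sp by (simp add: Compl_eq_Diff_UNIV)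

lemma un: "measure M (A \<union> B) = measure M A + measure M B - measure M (A \<inter> B)"
  using finite_measure_Diff'[of B A] finite_measure_Union[of A "B - A"]
  by (simp add: Un_Diff_cancel Int_commute)

lemma mono: "A \<subseteq> B \<Longrightarrow> measure M A \<le> measure M B"
  by (simp add: finite_measure_mono)

lemma one_int: assumes "measure M A \<ge> 1" shows "measure M (A \<inter> B) = measure M B"
proof -
  have "measure M (-A) = 0" using compl[of A] le1[of A] assms by linarith
  moreover have "measure M B \<le> measure M (A \<inter> B) + measure M (-A)"
  proof -
    have "(A \<inter> B) \<inter> -A = {}" by auto
    moreover have "B \<subseteq> (A \<inter> B) \<union> -A" by auto
    ultimately show ?thesis using un[of "A \<inter> B" "-A"] mono[of B "(A \<inter> B) \<union> -A"] by simp
  qed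
  ultimately show ?thesis using mono[of "A \<inter> B" B] by auto
qed

lemma int_ge: "measure M (A \<inter> B) \<ge> measure M A + measure M B - 1"
  using un[of A B] le1[of "A \<union> B"] by simp

end

lemma pmI: "is_model P \<Longrightarrow> pm (P i w)"
  unfolding is_model_def pm_def pm_axioms_def by auto

lemma uniq:
  assumes "is_model P" "measure (P i w) {u. val u t = d1} > 1/2"
    "measure (P i w) {u. val u t = d2} > 1/2"
  shows "d1 = d2"
proof (rule ccontr)
  assume ne: "d1 \<noteq> d2"
  interpret pm "P i w" using pmI[OF assms(1)] .
  have "{u. val u t = d1} \<inter> {u. val u t = d2} = {}" using ne by auto
  then show False using un[of "{u. val u t = d1}" "{u. val u t = d2}"]
      le1[of "{u. val u t = d1} \<union> {u. val u t = d2}"] assms by simp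
qed

lemma sound: "PTKv_plus \<phi> \<Longrightarrow> is_model P \<Longrightarrow> sat P V val w \<phi>"
proof (induction \<phi> arbitrary: w rule: PTKv_plus.induct)
  case (taut A \<sigma>)
  then show ?case by (simp add: psubst_sat taut_def)
next
  case (K_mono \<theta> \<theta>' \<phi> i)
  have "real_of_rat \<theta> \<le> real_of_rat \<theta>'" using K_mono(3) by (simp add: of_rat_less_eq)
  then show ?case by auto
next
  case (K_dist \<alpha> \<beta> \<phi> \<psi> i)
  interpret pm "P i w" using pmI[OF K_dist(5)] .
  show ?case
  proof (clarsimp)
    let ?A = "{u. sat P V val u \<phi> \<longrightarrow> sat P V val u \<psi>}"
    let ?B = "{u. sat P V val u \<phi>}"
    let ?C = "{u. sat P V val u \<psi>}"
    assume a: "real_of_rat \<alpha> \<le> measure (P i w) ?A" "real_of_rat \<beta> \<le> measure (P i w) ?B"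
    have "measure (P i w) (?A \<inter> ?B) \<le> measure (P i w) ?C" by (rule mono) auto
    then have "real_of_rat \<alpha> + real_of_rat \<beta> - 1 \<le> measure (P i w) ?C"
      using int_ge[of ?A ?B] a by linarith
    moreover have "real_of_rat (max 0 (\<alpha> + \<beta> - 1)) = max 0 (real_of_rat \<alpha> + real_of_rat \<beta> - 1)"
    proof -
      have "(1 \<le> \<alpha>+\<beta>) = (1 \<le> real_of_rat \<alpha> + real_of_rat \<beta>)"
        by (metis of_rat_1 of_rat_add of_rat_less_eq)
      then show ?thesis by (simp add: max_def of_rat_add of_rat_diff of_rat_less_eq)
    qed
    ultimately show "real_of_rat (max 0 (\<alpha> + \<beta> - 1)) \<le> measure (P i w) ?C" by simp
  qed
next
  case (K_cons \<alpha> \<beta> \<phi> i)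
  interpret pm "P i w" using pmI[OF K_cons(5)] .
  have "{u. \<not> sat P V val u \<phi>} = - {u. sat P V val u \<phi>}" by auto
  moreover have "real_of_rat \<alpha> + real_of_rat \<beta> > 1"
    using K_cons(3) by (metis of_rat_1 of_rat_add of_rat_less)
  ultimately show ?case using compl[of "{u. sat P V val u \<phi>}"] by auto
next
  case (K_zero \<phi> i)
  then show ?case by simp
next
  case (K_eq \<theta> i t s u)
  interpret pm "P i w" using pmI[OF K_eq(2)] .
  show ?case
  proof (clarsimp simp: Iff_def And_def)
    let ?A = "{u. val u t = val u s}"
    assume a: "1 \<le> measure (P i w) ?A"
    have "?A \<inter> {w. val w t = val w u} = ?A \<inter> {w. val w s = val w u}" by auto
    then have "measure (P i w) {w. val w t = val w u} = measure (P i w) {w. val w s = val w u}"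
      using one_int[OF a, of "{w. val w t = val w u}"] one_int[OF a, of "{w. val w s = val w u}"] by simp
    then show "(real_of_rat \<theta> \<le> measure (P i w) {w. val w t = val w u} \<longrightarrow>
                real_of_rat \<theta> \<le> measure (P i w) {w. val w s = val w u}) \<and>
               (real_of_rat \<theta> \<le> measure (P i w) {w. val w s = val w u} \<longrightarrow>
                real_of_rat \<theta> \<le> measure (P i w) {w. val w t = val w u})" by simp
  qed
next
  case (Kv_eq \<eta> i t s)
  interpret pm "P i w" using pmI[OF Kv_eq(2)] .
  have "1 \<le> measure (P i w) {u. val u t = val u s} \<Longrightarrow>
     measure (P i w) {u. val u t = d} = measure (P i w) {u. val u s = d}" for d
  proof -
    let ?A = "{u. val u t = val u s}"
    assume a: "1 \<le> measure (P i w) ?A"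
    have "?A \<inter> {u. val u t = d} = ?A \<inter> {u. val u s = d}" by auto
    then show ?thesis using one_int[OF a, of "{u. val u t = d}"] one_int[OF a, of "{u. val u s = d}"] by simp
  qed
  then show ?case by (auto simp: Iff_def And_def)
next
  case (K_equiv \<theta> \<phi> \<psi> i)
  interpret pm "P i w" using pmI[OF K_equiv(4)] .
  have h: "sat P V val w (K i 1 (Iff \<phi> \<psi>)) \<Longrightarrow> (sat P V val w (K i \<theta> \<phi>) \<longleftrightarrow> sat P V val w (K i \<theta> \<psi>))"
  proof -
    let ?A = "{u. sat P V val u (Iff \<phi> \<psi>)}"
    assume "sat P V val w (K i 1 (Iff \<phi> \<psi>))"
    then have a: "1 \<le> measure (P i w) ?A" by simp
    have "?A \<inter> {u. sat P V val u \<phi>} = ?A \<inter> {u. sat P V val u \<psi>}" by (auto simp: Iff_def And_def)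
    then have "measure (P i w) {u. sat P V val u \<phi>} = measure (P i w) {u. sat P V val u \<psi>}"
      using one_int[OF a, of "{u. sat P V val u \<phi>}"] one_int[OF a, of "{u. sat P V val u \<psi>}"] by simp
    then show ?thesis by simp
  qed
  have si: "sat P V val w' (Iff X Y) = (sat P V val w' X = sat P V val w' Y)" for X Y w'
    by (auto simp: Iff_def And_def)
  show ?case using h by (simp only: si sat.simps(4)) blast
next
  case (K_add \<alpha> \<beta> \<phi> \<psi> i)
  interpret pm "P i w" using pmI[OF K_add(6)] .
  let ?B = "{u. sat P V val u \<phi>}"
  let ?C = "{u. sat P V val u \<psi>}"
  let ?A = "{u. sat P V val u (Neg (And \<phi> \<psi>))}"
  have sa: "sat P V val w' (And X Y) = (sat P V val w' X \<and> sat P V val w' Y)" for X Y w'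
    by (simp add: And_def)
  show ?case
  proof (simp only: sat.simps(4) sa, intro impI, elim conjE)
    assume a1: "sat P V val w (K i \<alpha> \<phi>)" and a2: "sat P V val w (K i \<beta> \<psi>)"
      and a3: "sat P V val w (K i 1 (Neg (And \<phi> \<psi>)))"
    have m1: "real_of_rat \<alpha> \<le> measure (P i w) ?B" using a1 by simp
    have m2: "real_of_rat \<beta> \<le> measure (P i w) ?C" using a2 by simp
    have a: "1 \<le> measure (P i w) ?A" using a3 by simp
    have "?A \<inter> (?B \<inter> ?C) = {}" by (auto simp: And_def)
    then have z: "measure (P i w) (?B \<inter> ?C) = 0" using one_int[OF a, of "?B \<inter> ?C"] by simp
    have o: "{u. sat P V val u (Or \<phi> \<psi>)} = ?B \<union> ?C" by (auto simp: Or_def)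
    have r: "real_of_rat (\<alpha> + \<beta>) = real_of_rat \<alpha> + real_of_rat \<beta>" by (simp add: of_rat_add)
    have "real_of_rat (\<alpha> + \<beta>) \<le> measure (P i w) {u. sat P V val u (Or \<phi> \<psi>)}"
      unfolding o r un[of ?B ?C] z using m1 m2 by linarith
    then show "sat P V val w (K i (\<alpha> + \<beta>) (Or \<phi> \<psi>))" by (simp only: sat.simps(5))
  qed
next
  case (Kv_mono \<eta> \<zeta> i t)
  have hf: "real_of_rat (1/2) = 1/2" by (simp add: of_rat_divide)
  have h1: "real_of_rat \<zeta> > 1/2"
    using Kv_mono(2) unfolding ThetaV_def by (metis (mono_tags) hf mem_Collect_eq of_rat_less)
  have h2: "real_of_rat \<zeta> \<le> real_of_rat \<eta>" using Kv_mono(3) by (simp add: of_rat_less_eq)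
  show ?case
  proof (simp only: sat.simps(4), intro impI)
    assume "sat P V val w (Kv i \<eta> t)"
    then have "\<exists>!d. real_of_rat \<eta> \<le> measure (P i w) {u. val u t = d}" by (simp only: sat.simps(6))
    then obtain d where d: "real_of_rat \<eta> \<le> measure (P i w) {u. val u t = d}" by auto
    have "\<exists>!d. real_of_rat \<zeta> \<le> measure (P i w) {u. val u t = d}"
    proof (rule ex1I[of _ d])
      show "real_of_rat \<zeta> \<le> measure (P i w) {u. val u t = d}" using d h2 by linarith
    next
      fix e assume "real_of_rat \<zeta> \<le> measure (P i w) {u. val u t = e}"
      then show "e = d" using uniq[OF Kv_mono(4), of i w val t e d] d h1 h2 by linarith
    qed
    then show "sat P V val w (Kv i \<zeta> t)" by (simp only: sat.simps(6))
  qed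
next
  case (MP \<phi> \<psi>)
  then show ?case by simp
next
  case (Nec \<phi> \<theta> i)
  interpret pm "P i w" using pmI[OF Nec(4)] .
  have "{u. sat P V val u \<phi>} = UNIV" using Nec by auto
  then show ?case using Nec(2) prob_space sp by (simp add: ThetaK_def of_rat_less_eq)
qed (auto simp: And_def Iff_def)

theorem corollary1:
  fixes \<phi> :: "('p :: countable, 't :: countable, 'i :: finite) fm"
  assumes "wf \<phi>" and "PTKv_plus \<phi>"
  shows "valid_in TYPE('w) TYPE('d) \<phi>"
  using sound[OF assms(2)] unfolding valid_in_def by blast

end
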